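(* Let $(\mathbb{S},\Sigma)$ be a measurable space, let $\{\mu_n\}_{n=1,2,\ldots}$ be finite measures on $(\mathbb{S},\Sigma)$ converging in total variation to a finite measure $\mu$, and let $f,f_n$ ($n=1,2,\ldots$) be measurable $[-\infty,+\infty]$-valued functions on $\mathbb{S}$ with $f\in L^1(\mathbb{S};\mu)$ and $f_n\in L^1(\mathbb{S};\mu_n)$ for each $n$. Then $$\liminf_{n\to\infty}\inf_{C\in\Sigma}\Big(\int_C f_n(s)\,\mu_n(ds)-\int_C f(s)\,\mu(ds)\Big)\ge 0$$ if and only if both of the following hold: (i) for each $\varepsilon>0$, $\mu(\{s\in\mathbb{S}: f_n(s)\le f(s)-\varepsilon\})\to 0$ as $n\to\infty$; (ii) $\{f_n^-\}_{n=1,2,\ldots}$ is asymptotically uniformly integrable with respect to $\{\mu_n\}_{n=1,2,\ldots}$.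
   Context: $f^-=-\min\{f,0\}$. A sequence $\{h_n\}$ is asymptotically uniformly integrable with respect to $\{\mu_n\}$ if $\lim_{K\to+\infty}\limsup_{n\to\infty}\int_{\mathbb{S}}|h_n|\,\mathbf{1}\{|h_n|\ge K\}\,d\mu_n=0$. *)

theory Defs
  imports "HOL-Analysis.Analysis"
begin

definition tv_converges :: "(nat \<Rightarrow> 'a measure) \<Rightarrow> 'a measure \<Rightarrow> bool" where
  "tv_converges M \<mu> \<longleftrightarrow>
     (\<lambda>n. SUP C\<in>sets \<mu>. \<bar>measure (M n) C - measure \<mu> C\<bar>) \<longlonglongrightarrow> 0"

definition ereal_L1 :: "'a measure \<Rightarrow> ('a \<Rightarrow> ereal) \<Rightarrow> bool" where
  "ereal_L1 M f \<longleftrightarrow> f \<in> borel_measurable M \<and> (\<integral>\<^sup>+ x. e2ennreal \<bar>f x\<bar> \<partial>M) < \<infinity>"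

text \<open>Integral of an integrable extended-real function over C (finite a.e., so the real part suffices).\<close>
definition ereal_set_integral :: "'a measure \<Rightarrow> 'a set \<Rightarrow> ('a \<Rightarrow> ereal) \<Rightarrow> real" where
  "ereal_set_integral M C f = (LINT x:C|M. real_of_ereal (f x))"

definition neg_part :: "('a \<Rightarrow> ereal) \<Rightarrow> 'a \<Rightarrow> ereal" where
  "neg_part f x = - min (f x) 0"

definition asymp_unif_integrable :: "(nat \<Rightarrow> 'a measure) \<Rightarrow> (nat \<Rightarrow> 'a \<Rightarrow> ereal) \<Rightarrow> bool" where
  "asymp_unif_integrable M h \<longleftrightarrow>
     ((\<lambda>K::real. limsup (\<lambda>n. \<integral>\<^sup>+ x \<in> {x \<in> space (M n). \<bar>h n x\<bar> \<ge> ereal K}.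
                                 e2ennreal \<bar>h n x\<bar> \<partial>(M n))) \<longlongrightarrow> 0) at_top"

end

theory Submission
  imports Defs
begin

locale P41 =
  fixes M :: "nat \<Rightarrow> 'a measure" and \<mu> :: "'a measure"
    and f :: "'a \<Rightarrow> ereal" and fn :: "nat \<Rightarrow> 'a \<Rightarrow> ereal"
  assumes sets_M: "\<And>n. sets (M n) = sets \<mu>"
    and fin_M: "\<And>n. finite_measure (M n)"
    and fin_mu: "finite_measure \<mu>"
    and tv: "tv_converges M \<mu>"
    and f_L1: "ereal_L1 \<mu> f"
    and fn_L1: "\<And>n. ereal_L1 (M n) (fn n)"
begin

definition "fr x = real_of_ereal (f x)"
definition "gr n x = real_of_ereal (fn n x)"

lemma space_M[simp]: "space (M n) = space \<mu>"
  using sets_M sets_eq_imp_space_eq by blast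

lemma sets_M'[measurable_cong]: "sets (M n) = sets \<mu>" by (rule sets_M)

lemma f_meas[measurable]: "f \<in> borel_measurable \<mu>"
  using f_L1 unfolding ereal_L1_def by auto

lemma fn_meas[measurable]: "fn n \<in> borel_measurable \<mu>"
  using fn_L1[of n] measurable_cong_sets[OF sets_M refl] unfolding ereal_L1_def by auto

lemma fn_measM[measurable]: "fn n \<in> borel_measurable (M n)"
  using fn_L1[of n] unfolding ereal_L1_def by auto

lemma fr_meas[measurable]: "fr \<in> borel_measurable \<mu>"
  unfolding fr_def[abs_def] by measurable

lemma gr_meas[measurable]: "gr n \<in> borel_measurable \<mu>"
  unfolding gr_def[abs_def] by measurable

lemma gr_measM[measurable]: "gr n \<in> borel_measurable (M n)"
  unfolding gr_def[abs_def] by measurable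

lemma enn_le: "ennreal (real_of_ereal \<bar>x\<bar>) \<le> e2ennreal \<bar>x\<bar>"
  by (cases x) auto

lemma f_int: "integrable \<mu> fr"
proof (rule integrableI_bounded)
  have "(\<integral>\<^sup>+ x. ennreal (norm (fr x)) \<partial>\<mu>) \<le> (\<integral>\<^sup>+ x. e2ennreal \<bar>f x\<bar> \<partial>\<mu>)"
    by (intro nn_integral_mono) (simp add: fr_def enn_le)
  then show "(\<integral>\<^sup>+ x. ennreal (norm (fr x)) \<partial>\<mu>) < \<infinity>"
    using f_L1 unfolding ereal_L1_def by simp
qed simp

lemma g_int: "integrable (M n) (gr n)"
proof (rule integrableI_bounded)
  have "(\<integral>\<^sup>+ x. ennreal (norm (gr n x)) \<partial>M n) \<le> (\<integral>\<^sup>+ x. e2ennreal \<bar>fn n x\<bar> \<partial>M n)"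
    by (intro nn_integral_mono) (simp add: gr_def enn_le)
  then show "(\<integral>\<^sup>+ x. ennreal (norm (gr n x)) \<partial>M n) < \<infinity>"
    using fn_L1[of n] unfolding ereal_L1_def by simp
qed simp

lemma f_fin: "AE x in \<mu>. \<bar>f x\<bar> \<noteq> \<infinity>"
proof -
  have "AE x in \<mu>. e2ennreal \<bar>f x\<bar> \<noteq> \<infinity>"
    using f_L1 unfolding ereal_L1_def by (intro nn_integral_noteq_infinite) auto
  then show ?thesis by eventually_elim (auto simp: e2ennreal_infty)
qed

lemma fn_fin: "AE x in M n. \<bar>fn n x\<bar> \<noteq> \<infinity>"
proof -
  have "AE x in M n. e2ennreal \<bar>fn n x\<bar> \<noteq> \<infinity>"
    using fn_L1[of n] unfolding ereal_L1_def by (intro nn_integral_noteq_infinite) auto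
  then show ?thesis by eventually_elim (auto simp: e2ennreal_infty)
qed

lemma finM: "finite_measure (M n)" by (rule fin_M)
lemma finmu: "finite_measure \<mu>" by (rule fin_mu)

lemma meas_le_M: "measure (M n) C \<le> measure (M n) (space \<mu>)"
  using finite_measure.bounded_measure[OF fin_M[of n]] by simp

lemma meas_le_mu: "measure \<mu> C \<le> measure \<mu> (space \<mu>)"
  using finite_measure.bounded_measure[OF fin_mu] by simp

lemma tv_ev:
  assumes "e > 0"
  shows "eventually (\<lambda>n. \<forall>C\<in>sets \<mu>. \<bar>measure (M n) C - measure \<mu> C\<bar> \<le> e) sequentially"
proof -
  have "eventually (\<lambda>n. (SUP C\<in>sets \<mu>. \<bar>measure (M n) C - measure \<mu> C\<bar>) < e) sequentially"
    using tv assms unfolding tv_converges_def by (intro order_tendstoD(2)) auto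
  then show ?thesis
  proof eventually_elim
    case (elim n)
    show ?case
    proof
      fix C assume C: "C \<in> sets \<mu>"
      have "bdd_above ((\<lambda>C. \<bar>measure (M n) C - measure \<mu> C\<bar>) ` sets \<mu>)"
      proof (rule bdd_aboveI2)
        fix C
        show "\<bar>measure (M n) C - measure \<mu> C\<bar> \<le> measure (M n) (space \<mu>) + measure \<mu> (space \<mu>)"
          using meas_le_M[of n C] meas_le_mu[of C] measure_nonneg[of "M n" C] measure_nonneg[of \<mu> C]
          by linarith
      qed
      then have "\<bar>measure (M n) C - measure \<mu> C\<bar> \<le> (SUP C\<in>sets \<mu>. \<bar>measure (M n) C - measure \<mu> C\<bar>)"
        using C by (rule cSUP_upper2) simp
      then show "\<bar>measure (M n) C - measure \<mu> C\<bar> \<le> e" using elim by linarith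
    qed
  qed
qed

lemma tv_le:
  assumes "\<forall>C\<in>sets \<mu>. \<bar>measure (M n) C - measure \<mu> C\<bar> \<le> e" "C \<in> sets \<mu>"
  shows "measure (M n) C \<le> measure \<mu> C + e" "measure \<mu> C \<le> measure (M n) C + e"
  using assms by auto

lemma int_ind_const:
  assumes "finite_measure N" "D \<in> sets N"
  shows "(\<integral>x. indicator D x * c \<partial>N) = measure N D * c"
proof -
  interpret finite_measure N by fact
  show ?thesis using assms(2) by simp
qed

lemma int_ind_intg:
  fixes g :: "'b \<Rightarrow> real"
  assumes "integrable N g" "D \<in> sets N"
  shows "integrable N (\<lambda>x. indicator D x * g x)"
  using integrable_mult_indicator[OF assms(2,1)] by simp

lemma int_ind_c:
  assumes "finite_measure N" "D \<in> sets N"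
  shows "integrable N (\<lambda>x. indicator D x * (c::real))"
proof -
  interpret finite_measure N by fact
  show ?thesis using assms(2) by (intro integrable_const_bound[where B="\<bar>c\<bar>"]) (auto simp: indicator_def)
qed

lemma int_bdd:
  fixes g :: "'b \<Rightarrow> real"
  assumes "finite_measure N" "g \<in> borel_measurable N" "\<And>x. x \<in> space N \<Longrightarrow> \<bar>g x\<bar> \<le> B"
  shows "integrable N g"
proof -
  interpret finite_measure N by fact
  show ?thesis using assms by (intro integrable_const_bound[where B=B]) auto
qed

lemma transfer:
  fixes h :: "'a \<Rightarrow> real" and B e :: real
  assumes h[measurable]: "h \<in> borel_measurable \<mu>" and hB: "\<And>x. x \<in> space \<mu> \<Longrightarrow> \<bar>h x\<bar> \<le> B"
    and e: "e > 0"
  shows "eventually (\<lambda>n. \<forall>D\<in>sets \<mu>.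
     \<bar>(\<integral>x. indicator D x * h x \<partial>M n) - (\<integral>x. indicator D x * h x \<partial>\<mu>)\<bar> \<le> e) sequentially"
proof -
  define S where "S = measure \<mu> (space \<mu>)"
  have S0: "S \<ge> 0" unfolding S_def by simp
  define \<delta> where "\<delta> = e / (4 * (S + 1))"
  have d0: "\<delta> > 0" unfolding \<delta>_def using e S0 by simp
  define k where "k x = floor (h x / \<delta>)" for x
  define N :: int where "N = ceiling (\<bar>B\<bar> / \<delta>) + 1"
  define J where "J = {-N..N}"
  define E where "E j = {x\<in>space \<mu>. of_int j * \<delta> \<le> h x \<and> h x < (of_int j + 1) * \<delta>}" for j :: int
  have E_sets[measurable]: "E j \<in> sets \<mu>" for j unfolding E_def by measurable
  have kE: "x \<in> E j \<longleftrightarrow> x \<in> space \<mu> \<and> k x = j" for x j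
  proof -
    have "k x = j \<longleftrightarrow> of_int j \<le> h x / \<delta> \<and> h x / \<delta> < of_int j + 1"
      unfolding k_def by (simp add: floor_eq_iff)
    also have "\<dots> \<longleftrightarrow> of_int j * \<delta> \<le> h x \<and> h x < (of_int j + 1) * \<delta>"
      using d0 by (simp add: field_simps)
    finally show ?thesis unfolding E_def by auto
  qed
  have kJ: "k x \<in> J" if "x \<in> space \<mu>" for x
  proof -
    have "\<bar>h x / \<delta>\<bar> \<le> \<bar>B\<bar> / \<delta>" using hB[OF that] d0
      by (simp add: abs_divide divide_right_mono)
    then have "- (\<bar>B\<bar> / \<delta>) \<le> h x / \<delta>" "h x / \<delta> \<le> \<bar>B\<bar> / \<delta>" by linarith+
    then have "k x \<le> N" "- N \<le> k x" unfolding k_def N_def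
      by (auto intro!: floor_le_ceiling le_floor_iff[THEN iffD2] simp: ceiling_le_iff) linarith+
    then show ?thesis unfolding J_def by auto
  qed
  have kb: "of_int (k x) * \<delta> \<le> h x" "h x < of_int (k x) * \<delta> + \<delta>" if "x \<in> space \<mu>" for x
    using kE[of x "k x"] that unfolding E_def by (auto simp: algebra_simps)
  define s where "s D x = (\<Sum>j\<in>J. indicator (D \<inter> E j) x * (of_int j * \<delta>))" for D x
  have s_eq: "s D x = indicator D x * (of_int (k x) * \<delta>)" if "x \<in> space \<mu>" for D x
  proof -
    have "s D x = (\<Sum>j\<in>J. if j = k x then indicator D x * (of_int j * \<delta>) else 0)"
      unfolding s_def using kE[of x] that by (intro sum.cong) (auto simp: indicator_def)
    also have "\<dots> = indicator D x * (of_int (k x) * \<delta>)"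
      using kJ[OF that] J_def by simp
    finally show ?thesis .
  qed
  define W where "W = (\<Sum>j\<in>J. \<bar>of_int j * \<delta>\<bar>)"
  have W0: "W \<ge> 0" unfolding W_def by (simp add: sum_nonneg)
  have approx: "\<bar>(\<integral>x. indicator D x * h x \<partial>\<nu>) - (\<Sum>j\<in>J. measure \<nu> (D \<inter> E j) * (of_int j * \<delta>))\<bar>
      \<le> \<delta> * measure \<nu> (space \<mu>)"
    if fin: "finite_measure \<nu>" and sets: "sets \<nu> = sets \<mu>" and D: "D \<in> sets \<mu>" for \<nu> D
  proof -
    interpret \<nu>: finite_measure \<nu> by fact
    have sp: "space \<nu> = space \<mu>" using sets sets_eq_imp_space_eq by blast
    have hm[measurable]: "h \<in> borel_measurable \<nu>" by (metis h measurable_cong_sets sets)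
    have Dn[measurable]: "D \<in> sets \<nu>" using D sets by simp
    have En[measurable]: "E j \<in> sets \<nu>" for j using sets by simp
    have ih: "integrable \<nu> (\<lambda>x. indicator D x * h x)"
      by (rule int_bdd[OF fin, where B="\<bar>B\<bar>"]) (auto simp: sp indicator_def intro: order.trans[OF hB])
    have ij: "integrable \<nu> (\<lambda>x. indicator (D \<inter> E j) x * (of_int j * \<delta>))" for j
        by (rule int_bdd[OF fin, where B="\<bar>of_int j * \<delta>\<bar>"]) (auto simp: indicator_def abs_mult)
    have is_: "integrable \<nu> (s D)" unfolding s_def
      by (rule Bochner_Integration.integrable_sum) (rule ij)
    have "(\<integral>x. s D x \<partial>\<nu>) = (\<Sum>j\<in>J. measure \<nu> (D \<inter> E j) * (of_int j * \<delta>))"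
      unfolding s_def by (subst Bochner_Integration.integral_sum[OF ij]) (auto intro!: sum.cong int_ind_const[OF fin])
    moreover have "(\<integral>x. indicator D x * h x \<partial>\<nu>) - (\<integral>x. s D x \<partial>\<nu>) = (\<integral>x. indicator D x * h x - s D x \<partial>\<nu>)"
      using ih is_ by simp
    moreover have "(\<integral>x. indicator D x * h x - s D x \<partial>\<nu>) \<ge> 0"
      by (intro integral_nonneg_AE AE_I2) (auto simp: sp s_eq indicator_def kb)
    moreover have "(\<integral>x. indicator D x * h x - s D x \<partial>\<nu>) \<le> (\<integral>x. \<delta> \<partial>\<nu>)"
    proof (intro integral_mono)
      show "integrable \<nu> (\<lambda>x. indicator D x * h x - s D x)" using ih is_ by simp
      fix x assume "x \<in> space \<nu>"
      then show "indicator D x * h x - s D x \<le> \<delta>"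
        using kb[of x] d0 by (auto simp: sp s_eq indicator_def)
    qed simp
    moreover have "(\<integral>x. \<delta> \<partial>\<nu>) = \<delta> * measure \<nu> (space \<mu>)" by (simp add: sp)
    ultimately show ?thesis by linarith
  qed
  have ev1: "eventually (\<lambda>n. \<forall>C\<in>sets \<mu>. \<bar>measure (M n) C - measure \<mu> C\<bar> \<le> min 1 (e / (2 * (W + 1)))) sequentially"
    using e W0 by (intro tv_ev) auto
  then show ?thesis
  proof eventually_elim
    case (elim n)
    define \<tau> where "\<tau> = min 1 (e / (2 * (W + 1)))"
    have tau: "\<tau> \<le> 1" "\<tau> * W \<le> e / 2" "\<tau> \<ge> 0"
    proof -
      show "\<tau> \<le> 1" unfolding \<tau>_def by simp
      have "\<tau> * W \<le> (e / (2 * (W + 1))) * (W + 1)" unfolding \<tau>_def using W0 e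
        by (intro mult_mono) auto
      also have "\<dots> = e / 2" using W0 by (simp add: field_simps)
      finally show "\<tau> * W \<le> e / 2" .
      show "\<tau> \<ge> 0" unfolding \<tau>_def using e W0 by simp
    qed
    have el: "\<forall>C\<in>sets \<mu>. \<bar>measure (M n) C - measure \<mu> C\<bar> \<le> \<tau>" using elim unfolding \<tau>_def .
    show ?case
    proof
      fix D assume D: "D \<in> sets \<mu>"
      note a1 = approx[OF fin_M[of n] sets_M D]
      note a2 = approx[OF fin_mu refl D]
      have "\<bar>(\<Sum>j\<in>J. measure (M n) (D \<inter> E j) * (of_int j * \<delta>)) - (\<Sum>j\<in>J. measure \<mu> (D \<inter> E j) * (of_int j * \<delta>))\<bar>
          = \<bar>\<Sum>j\<in>J. (measure (M n) (D \<inter> E j) - measure \<mu> (D \<inter> E j)) * (of_int j * \<delta>)\<bar>"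
        by (simp add: sum_subtractf left_diff_distrib)
      also have "\<dots> \<le> (\<Sum>j\<in>J. \<bar>(measure (M n) (D \<inter> E j) - measure \<mu> (D \<inter> E j)) * (of_int j * \<delta>)\<bar>)"
        by (rule sum_abs)
      also have "\<dots> \<le> (\<Sum>j\<in>J. \<tau> * \<bar>of_int j * \<delta>\<bar>)"
        unfolding abs_mult using el D by (intro sum_mono mult_right_mono) auto
      also have "\<dots> = \<tau> * W" unfolding W_def by (simp add: sum_distrib_left)
      finally have a3: "\<bar>(\<Sum>j\<in>J. measure (M n) (D \<inter> E j) * (of_int j * \<delta>)) - (\<Sum>j\<in>J. measure \<mu> (D \<inter> E j) * (of_int j * \<delta>))\<bar> \<le> \<tau> * W" .
      have mS: "measure (M n) (space \<mu>) \<le> S + 1" using el tau unfolding S_def by force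
      have "\<delta> * measure (M n) (space \<mu>) + \<delta> * S \<le> \<delta> * (2 * S + 1)"
        using mult_left_mono[OF mS, of \<delta>] d0 by (simp add: algebra_simps)
      also have "\<dots> \<le> e / 2" unfolding \<delta>_def using S0 e by (simp add: field_simps)
      finally have "\<delta> * measure (M n) (space \<mu>) + \<delta> * S \<le> e / 2" .
      with a1 a2 a3 tau show "\<bar>(\<integral>x. indicator D x * h x \<partial>M n) - (\<integral>x. indicator D x * h x \<partial>\<mu>)\<bar> \<le> e"
        unfolding S_def by linarith
    qed
  qed
qed

definition "bigf L = {x\<in>space \<mu>. \<bar>f x\<bar> > ereal L}"
definition "smallf L = {x\<in>space \<mu>. \<bar>f x\<bar> \<le> ereal L}"
definition "tail L = (\<integral>x. \<bar>fr x\<bar> * indicator (bigf L) x \<partial>\<mu>)"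

lemma bigf_sets[measurable]: "bigf L \<in> sets \<mu>" unfolding bigf_def by measurable
lemma smallf_sets[measurable]: "smallf L \<in> sets \<mu>" unfolding smallf_def by measurable

lemma absfr_int: "integrable \<mu> (\<lambda>x. \<bar>fr x\<bar>)" using f_int by auto

lemma int_ind_absfr: "C \<in> sets \<mu> \<Longrightarrow> integrable \<mu> (\<lambda>x. \<bar>fr x\<bar> * indicator C x)"
  using integrable_mult_indicator[OF _ absfr_int, of C] by (simp only: real_scaleR_def mult.commute)

lemma int_ind_fr: "C \<in> sets \<mu> \<Longrightarrow> integrable \<mu> (\<lambda>x. indicator C x * fr x)"
  using integrable_mult_indicator[OF _ f_int, of C] by (simp only: real_scaleR_def)

lemma int_ind_gr: "C \<in> sets \<mu> \<Longrightarrow> integrable (M n) (\<lambda>x. indicator C x * gr n x)"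
  using integrable_mult_indicator[OF _ g_int, of C n] sets_M[of n] by (simp only: real_scaleR_def)

lemma tail_nonneg: "tail L \<ge> 0" unfolding tail_def by simp

lemma bigf_mono: "L \<le> L' \<Longrightarrow> bigf L' \<subseteq> bigf L"
  unfolding bigf_def by (auto intro: order.strict_trans1[of "ereal L" "ereal L'"])

lemma tail_mono: assumes "L \<le> L'" shows "tail L' \<le> tail L"
  unfolding tail_def
proof (rule integral_mono)
  fix x assume "x \<in> space \<mu>"
  have "indicator (bigf L') x \<le> (indicator (bigf L) x :: real)"
    using bigf_mono[OF assms] by (auto simp: indicator_def)
  then show "\<bar>fr x\<bar> * indicator (bigf L') x \<le> \<bar>fr x\<bar> * indicator (bigf L) x"
    by (rule mult_left_mono) simp
qed (auto intro: int_ind_absfr)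

lemma tail_lim: "(\<lambda>n. tail (real n)) \<longlonglongrightarrow> 0"
proof -
  have "(\<lambda>n. \<integral>x. \<bar>fr x\<bar> * indicator (bigf (real n)) x \<partial>\<mu>) \<longlonglongrightarrow> (\<integral>x. 0 \<partial>\<mu>)"
  proof (rule integral_dominated_convergence[where w="\<lambda>x. \<bar>fr x\<bar>"])
    show "AE x in \<mu>. (\<lambda>n. \<bar>fr x\<bar> * indicator (bigf (real n)) x) \<longlonglongrightarrow> 0"
    proof (rule AE_I2)
      fix x assume x: "x \<in> space \<mu>"
      show "(\<lambda>n. \<bar>fr x\<bar> * indicator (bigf (real n)) x) \<longlonglongrightarrow> 0"
      proof (cases "f x")
        case (real r)
        obtain N :: nat where N: "\<bar>r\<bar> \<le> real N" using real_arch_simple by blast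
        have "eventually (\<lambda>n. \<bar>fr x\<bar> * indicator (bigf (real n)) x = 0) sequentially"
          using eventually_ge_at_top[of N]
        proof eventually_elim
          case (elim n) then show ?case using N real
            by (auto simp: bigf_def indicator_def)
        qed
        then show ?thesis by (rule tendsto_eventually)
      qed (auto simp: fr_def)
    qed
  next
    show "(\<lambda>x. 0::real) \<in> borel_measurable \<mu>" by simp
    show "(\<lambda>x. \<bar>fr x\<bar> * indicator (bigf (real i)) x) \<in> borel_measurable \<mu>" for i by measurable
    show "integrable \<mu> (\<lambda>x. \<bar>fr x\<bar>)" by (rule absfr_int)
    show "AE x in \<mu>. norm (\<bar>fr x\<bar> * indicator (bigf (real i)) x) \<le> \<bar>fr x\<bar>" for i
      by (intro AE_I2) (simp add: indicator_def)
  qed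
  then show ?thesis unfolding tail_def by simp
qed

lemma tail_small:
  assumes "\<eta> > 0" shows "\<exists>L0. \<forall>L\<ge>L0. tail L \<le> \<eta>"
proof -
  obtain N where N: "\<forall>n\<ge>N. norm (tail (real n) - 0) < \<eta>"
    using LIMSEQ_D[OF tail_lim assms] by blast
  then have "norm (tail (real N) - 0) < \<eta>" by blast
  then have tN: "tail (real N) \<le> \<eta>" by simp
  show ?thesis
  proof (intro exI[of _ "real N"] allI impI)
    fix L assume "real N \<le> L"
    then show "tail L \<le> \<eta>" using tail_mono[of "real N" L] tN by linarith
  qed
qed

lemma markov_bigf:
  assumes "L \<ge> 0" shows "L * measure \<mu> (bigf L) \<le> tail L"
proof -
  have "(\<integral>x. L * indicator (bigf L) x \<partial>\<mu>) \<le> tail L"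
    unfolding tail_def
  proof (intro integral_mono_AE int_ind_absfr bigf_sets)
    show "integrable \<mu> (\<lambda>x. L * indicator (bigf L) x)"
      using int_ind_c[OF fin_mu bigf_sets, of L L] by (simp only: mult.commute)
    show "AE x in \<mu>. L * indicator (bigf L) x \<le> \<bar>fr x\<bar> * indicator (bigf L) x"
      using f_fin by eventually_elim (auto simp: bigf_def indicator_def fr_def abs_real_of_ereal less_imp_le)
  qed
  moreover have "(\<integral>x. L * indicator (bigf L) x \<partial>\<mu>) = L * measure \<mu> (bigf L)"
    using int_ind_const[OF fin_mu bigf_sets, of L L] by (simp add: mult.commute)
  ultimately show ?thesis by simp
qed

lemma abs_int_bound:
  assumes C: "C \<in> sets \<mu>" and L: "L \<ge> 0"
  shows "(\<integral>x. indicator C x * \<bar>fr x\<bar> \<partial>\<mu>) \<le> tail L + L * measure \<mu> (C \<inter> smallf L)"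
proof -
  have "(\<integral>x. indicator C x * \<bar>fr x\<bar> \<partial>\<mu>) \<le> (\<integral>x. \<bar>fr x\<bar> * indicator (bigf L) x + indicator (C \<inter> smallf L) x * L \<partial>\<mu>)"
  proof (intro integral_mono)
    show "integrable \<mu> (\<lambda>x. indicator C x * \<bar>fr x\<bar>)" using int_ind_absfr[OF C] by (simp add: mult.commute)
    show "integrable \<mu> (\<lambda>x. \<bar>fr x\<bar> * indicator (bigf L) x + indicator (C \<inter> smallf L) x * L)"
      using C by (intro Bochner_Integration.integrable_add int_ind_absfr bigf_sets int_ind_c[OF fin_mu]) auto
    fix x assume x: "x \<in> space \<mu>"
    show "indicator C x * \<bar>fr x\<bar> \<le> \<bar>fr x\<bar> * indicator (bigf L) x + indicator (C \<inter> smallf L) x * L"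
    proof (cases "\<bar>f x\<bar> > ereal L")
      case True then show ?thesis using x L by (auto simp: indicator_def bigf_def)
    next
      case False
      then have "\<bar>fr x\<bar> \<le> L" unfolding fr_def using L by (cases "f x") auto
      then show ?thesis using x L False by (auto simp: indicator_def bigf_def smallf_def not_less)
    qed
  qed
  also have "\<dots> = tail L + measure \<mu> (C \<inter> smallf L) * L"
    unfolding tail_def using C
    by (simp only: Bochner_Integration.integral_add[OF int_ind_absfr[OF bigf_sets] int_ind_c[OF fin_mu, of "C \<inter> smallf L" L]]
         int_ind_const[OF fin_mu, of "C \<inter> smallf L" L] sets.Int smallf_sets)
  finally show ?thesis by (simp add: mult.commute)
qed

definition "I n C = ereal_set_integral (M n) C (fn n) - ereal_set_integral \<mu> C f"

lemma I_eq: "I n C = (\<integral>x. indicator C x * gr n x \<partial>M n) - (\<integral>x. indicator C x * fr x \<partial>\<mu>)"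
  unfolding I_def ereal_set_integral_def set_lebesgue_integral_def gr_def fr_def by simp

lemma I_lower: assumes C: "C \<in> sets \<mu>"
  shows "I n C \<ge> - (\<integral>x. \<bar>gr n x\<bar> \<partial>M n) - (\<integral>x. \<bar>fr x\<bar> \<partial>\<mu>)"
proof -
  have "(\<integral>x. - \<bar>gr n x\<bar> \<partial>M n) \<le> (\<integral>x. indicator C x * gr n x \<partial>M n)"
    using C g_int[of n] by (intro integral_mono int_ind_gr) (auto simp: indicator_def)
  moreover have "(\<integral>x. indicator C x * fr x \<partial>\<mu>) \<le> (\<integral>x. \<bar>fr x\<bar> \<partial>\<mu>)"
    using C f_int by (intro integral_mono int_ind_fr absfr_int) (auto simp: indicator_def)
  ultimately show ?thesis unfolding I_eq by simp
qed

lemma I_bdd: "bdd_below ((\<lambda>C. I n C) ` sets \<mu>)"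
  using I_lower[of _ n] by (intro bdd_belowI2) blast

definition "U n K = {x\<in>space \<mu>. fn n x \<le> - ereal K}"
lemma U_sets[measurable]: "U n K \<in> sets \<mu>" unfolding U_def by measurable

definition "u n K = (\<integral>\<^sup>+ x \<in> {x\<in>space (M n). \<bar>neg_part (fn n) x\<bar> \<ge> ereal K}. e2ennreal \<bar>neg_part (fn n) x\<bar> \<partial>M n)"

lemma aui_iff: "asymp_unif_integrable M (\<lambda>n. neg_part (fn n)) \<longleftrightarrow> ((\<lambda>K. limsup (\<lambda>n. u n K)) \<longlongrightarrow> 0) at_top"
  unfolding asymp_unif_integrable_def u_def by simp

lemma U_eq: assumes "K > 0"
  shows "{x\<in>space (M n). \<bar>neg_part (fn n) x\<bar> \<ge> ereal K} = U n K"
proof -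
  have "\<bar>neg_part (fn n) x\<bar> \<ge> ereal K \<longleftrightarrow> fn n x \<le> - ereal K" for x
    using assms by (cases "fn n x") (auto simp: neg_part_def min_def)
  then show ?thesis unfolding U_def by auto
qed

lemma u_eq: assumes K: "K > 0"
  shows "u n K = ennreal (- (\<integral>x. indicator (U n K) x * gr n x \<partial>M n))"
proof -
  have "u n K = (\<integral>\<^sup>+ x. e2ennreal \<bar>neg_part (fn n) x\<bar> * indicator (U n K) x \<partial>M n)"
    unfolding u_def U_eq[OF K] by simp
  also have "\<dots> = (\<integral>\<^sup>+ x. ennreal (- (indicator (U n K) x * gr n x)) \<partial>M n)"
  proof (rule nn_integral_cong_AE)
    show "AE x in M n. e2ennreal \<bar>neg_part (fn n) x\<bar> * indicator (U n K) x = ennreal (- (indicator (U n K) x * gr n x))"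
      using fn_fin[of n]
    proof eventually_elim
      case (elim x)
      then obtain r where r: "fn n x = ereal r" by (cases "fn n x") auto
      show ?case using K by (auto simp: r U_def neg_part_def gr_def indicator_def min_def)
    qed
  qed
  also have "\<dots> = ennreal (\<integral>x. - (indicator (U n K) x * gr n x) \<partial>M n)"
  proof (rule nn_integral_eq_integral)
    show "integrable (M n) (\<lambda>x. - (indicator (U n K) x * gr n x))"
      using int_ind_gr[OF U_sets] by simp
    show "AE x in M n. 0 \<le> - (indicator (U n K) x * gr n x)"
      using K by (intro AE_I2) (auto simp: U_def indicator_def gr_def real_of_ereal_le_0 intro: order.trans[of _ "ereal (-K)"])
  qed
  finally show ?thesis by simp
qed

lemma KU_le: assumes K: "K > 0"
  shows "K * measure (M n) (U n K) \<le> - (\<integral>x. indicator (U n K) x * gr n x \<partial>M n)"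
proof -
  have "(\<integral>x. indicator (U n K) x * K \<partial>M n) \<le> (\<integral>x. - (indicator (U n K) x * gr n x) \<partial>M n)"
  proof (rule integral_mono_AE)
    show "integrable (M n) (\<lambda>x. indicator (U n K) x * K)" using int_ind_c[OF fin_M, of "U n K" n K] sets_M by simp
    show "integrable (M n) (\<lambda>x. - (indicator (U n K) x * gr n x))" using int_ind_gr[OF U_sets] by simp
    show "AE x in M n. indicator (U n K) x * K \<le> - (indicator (U n K) x * gr n x)"
      using fn_fin[of n]
    proof eventually_elim
      case (elim x)
      then obtain r where r: "fn n x = ereal r" by (cases "fn n x") auto
      show ?case using K by (auto simp: r U_def gr_def indicator_def)
    qed
  qed
  moreover have "(\<integral>x. indicator (U n K) x * K \<partial>M n) = K * measure (M n) (U n K)"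
    using int_ind_const[OF fin_M, of "U n K" n K] sets_M by simp
  ultimately show ?thesis by (simp add: mult.commute)
qed

definition "Bs n \<epsilon> = {s\<in>space \<mu>. fn n s \<le> f s - ereal \<epsilon>}"
lemma Bs_sets[measurable]: "Bs n \<epsilon> \<in> sets \<mu>" unfolding Bs_def by measurable

lemma key2:
  assumes i: "\<forall>\<epsilon>>0. (\<lambda>n. measure \<mu> (Bs n \<epsilon>)) \<longlonglongrightarrow> 0"
    and ii: "((\<lambda>K. limsup (\<lambda>n. u n K)) \<longlongrightarrow> 0) at_top"
    and \<eta>: "\<eta> > 0"
  shows "eventually (\<lambda>n. \<forall>C\<in>sets \<mu>. I n C \<ge> - ((8 + measure \<mu> (space \<mu>)) * \<eta>)) sequentially"
proof -
  define S where "S = measure \<mu> (space \<mu>)"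
  have S0: "S \<ge> 0" unfolding S_def by simp
  have "eventually (\<lambda>K. limsup (\<lambda>n. u n K) < ennreal \<eta>) at_top"
    using ii \<eta> by (intro order_tendstoD(2)) auto
  then obtain K0 where K0: "\<And>K. K \<ge> K0 \<Longrightarrow> limsup (\<lambda>n. u n K) < ennreal \<eta>"
    unfolding eventually_at_top_linorder by blast
  define K where "K = max K0 1"
  have K1: "K \<ge> 1" unfolding K_def by simp
  have evu: "eventually (\<lambda>n. u n K < ennreal \<eta>) sequentially"
    using K0[of K] unfolding K_def by (intro Limsup_lessD) auto
  obtain L0 where L0: "\<And>L. L \<ge> L0 \<Longrightarrow> tail L \<le> \<eta>" using tail_small[OF \<eta>] by blast
  define L where "L = max L0 K"
  have LK: "L \<ge> K" and tL: "tail L \<le> \<eta>" unfolding L_def using L0 by auto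
  have KbL: "K * measure \<mu> (bigf L) \<le> \<eta>"
  proof -
    have "K * measure \<mu> (bigf L) \<le> L * measure \<mu> (bigf L)" using LK by (intro mult_right_mono) auto
    also have "\<dots> \<le> tail L" using markov_bigf[of L] LK K1 by simp
    finally show ?thesis using tL by simp
  qed
  define h where "h x = indicator (smallf L) x * fr x" for x
  have h_meas[measurable]: "h \<in> borel_measurable \<mu>" unfolding h_def[abs_def] by measurable
  have hB: "\<bar>h x\<bar> \<le> L" if "x \<in> space \<mu>" for x
    using LK K1 by (cases "f x") (auto simp: h_def indicator_def smallf_def fr_def)
  have ev_tr: "eventually (\<lambda>n. \<forall>D\<in>sets \<mu>.
     \<bar>(\<integral>x. indicator D x * h x \<partial>M n) - (\<integral>x. indicator D x * h x \<partial>\<mu>)\<bar> \<le> \<eta>) sequentially"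
    by (rule transfer[OF h_meas hB \<eta>])
  have ev_B: "eventually (\<lambda>n. measure \<mu> (Bs n \<eta>) < \<eta> / (K + L)) sequentially"
    using i \<eta> K1 LK by (intro order_tendstoD(2)) auto
  have ev_tv: "eventually (\<lambda>n. \<forall>C\<in>sets \<mu>. \<bar>measure (M n) C - measure \<mu> C\<bar> \<le> \<eta> / K) sequentially"
    using \<eta> K1 by (intro tv_ev) auto
  have ev_tv1: "eventually (\<lambda>n. \<forall>C\<in>sets \<mu>. \<bar>measure (M n) C - measure \<mu> C\<bar> \<le> 1) sequentially"
    by (intro tv_ev) auto
  from evu ev_tr ev_B ev_tv ev_tv1 show ?thesis
  proof eventually_elim
    case (elim n)
    note un = elim(1) and tr = elim(2) and Bn = elim(3) and tvn = elim(4) and tv1 = elim(5)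
    show ?case
    proof
      fix C assume C[measurable]: "C \<in> sets \<mu>"
      define B where "B = Bs n \<eta>"
      have B[measurable]: "B \<in> sets \<mu>" unfolding B_def by simp
      define C1 where "C1 = C \<inter> (B \<union> bigf L)"
      define C2 where "C2 = C \<inter> smallf L - B"
      have C1s[measurable]: "C1 \<in> sets \<mu>" and C2s[measurable]: "C2 \<in> sets \<mu>"
        unfolding C1_def C2_def by auto
      have Csub: "C \<subseteq> space \<mu>" using C sets.sets_into_space by blast
      have ind: "indicator C x = indicator C1 x + (indicator C2 x :: real)" for x
      proof -
        have "C1 \<inter> C2 = {}" "C1 \<union> C2 = C"
          using Csub unfolding C1_def C2_def smallf_def bigf_def by (auto simp: not_less)
        then have "indicator C x = (indicator (C1 \<union> C2) x :: real)" by simp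
        also have "\<dots> = indicator C1 x + indicator C2 x"
          using \<open>C1 \<inter> C2 = {}\<close> by (auto simp: indicator_def)
        finally show ?thesis .
      qed
      have splitg: "(\<integral>x. indicator C x * gr n x \<partial>M n) = (\<integral>x. indicator C1 x * gr n x \<partial>M n) + (\<integral>x. indicator C2 x * gr n x \<partial>M n)"
        unfolding ind distrib_right by (rule Bochner_Integration.integral_add; intro int_ind_gr C1s C2s)
      have splitf: "(\<integral>x. indicator C x * fr x \<partial>\<mu>) = (\<integral>x. indicator C1 x * fr x \<partial>\<mu>) + (\<integral>x. indicator C2 x * fr x \<partial>\<mu>)"
        unfolding ind distrib_right by (rule Bochner_Integration.integral_add; intro int_ind_fr C1s C2s)
      have UKpos: "K > 0" using K1 by simp
      have uX: "- (\<integral>x. indicator (U n K) x * gr n x \<partial>M n) < \<eta>"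
      proof (rule ccontr)
        assume "\<not> ?thesis"
        then have "ennreal \<eta> \<le> ennreal (- (\<integral>x. indicator (U n K) x * gr n x \<partial>M n))"
          by (intro ennreal_leI) simp
        then show False using un u_eq[OF UKpos, of n] by simp
      qed
      have a: "(\<integral>x. indicator C1 x * gr n x \<partial>M n) \<ge> (\<integral>x. indicator (U n K) x * gr n x \<partial>M n) - K * measure (M n) C1"
      proof -
        have "(\<integral>x. indicator (U n K) x * gr n x - indicator C1 x * K \<partial>M n) \<le> (\<integral>x. indicator C1 x * gr n x \<partial>M n)"
        proof (rule integral_mono_AE)
          show "integrable (M n) (\<lambda>x. indicator (U n K) x * gr n x - indicator C1 x * K)"
            using int_ind_c[OF fin_M, of C1 n K] sets_M[of n]
            by (intro Bochner_Integration.integrable_diff int_ind_gr U_sets) auto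
          show "integrable (M n) (\<lambda>x. indicator C1 x * gr n x)" by (intro int_ind_gr C1s)
          show "AE x in M n. indicator (U n K) x * gr n x - indicator C1 x * K \<le> indicator C1 x * gr n x"
            using fn_fin[of n]
          proof eventually_elim
            case (elim x)
            then obtain r where r: "fn n x = ereal r" by (cases "fn n x") auto
            have "x \<in> C1 \<Longrightarrow> x \<in> space \<mu>" using Csub unfolding C1_def by auto
            then show ?case using UKpos by (auto simp: r U_def gr_def indicator_def)
          qed
        qed
        moreover have "(\<integral>x. indicator (U n K) x * gr n x - indicator C1 x * K \<partial>M n)
            = (\<integral>x. indicator (U n K) x * gr n x \<partial>M n) - K * measure (M n) C1"
          using Bochner_Integration.integral_diff[OF int_ind_gr[OF U_sets] int_ind_c[OF fin_M, of C1 n K]]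
            int_ind_const[OF fin_M, of C1 n K] sets_M[of n]
          by (simp add: mult.commute)
        ultimately show ?thesis by simp
      qed
      have b: "K * measure (M n) C1 \<le> K * measure \<mu> B + \<eta> + \<eta>"
      proof -
        have "measure (M n) C1 \<le> measure \<mu> C1 + \<eta> / K" using tv_le[OF tvn C1s] by simp
        also have "measure \<mu> C1 \<le> measure \<mu> (B \<union> bigf L)"
          unfolding C1_def by (intro finite_measure.finite_measure_mono[OF fin_mu]) auto
        also have "\<dots> \<le> measure \<mu> B + measure \<mu> (bigf L)"
          by (intro measure_Un_le) auto
        finally have "K * measure (M n) C1 \<le> K * (measure \<mu> B + measure \<mu> (bigf L) + \<eta> / K)"
          using K1 by (intro mult_left_mono) auto
        also have "\<dots> = K * measure \<mu> B + K * measure \<mu> (bigf L) + \<eta>"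
          using K1 by (simp add: field_simps)
        finally show ?thesis using KbL by linarith
      qed
      have c: "(\<integral>x. indicator C1 x * fr x \<partial>\<mu>) \<le> \<eta> + L * measure \<mu> B"
      proof -
        have "(\<integral>x. indicator C1 x * fr x \<partial>\<mu>) \<le> (\<integral>x. indicator C1 x * \<bar>fr x\<bar> \<partial>\<mu>)"
          using int_ind_absfr[OF C1s] by (intro integral_mono int_ind_fr C1s) (auto simp: indicator_def mult.commute)
        also have "\<dots> \<le> tail L + L * measure \<mu> (C1 \<inter> smallf L)"
          using LK K1 by (intro abs_int_bound) auto
        finally have c1: "(\<integral>x. indicator C1 x * fr x \<partial>\<mu>) \<le> tail L + L * measure \<mu> (C1 \<inter> smallf L)" .
        have "measure \<mu> (C1 \<inter> smallf L) \<le> measure \<mu> B"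
          unfolding C1_def by (intro finite_measure.finite_measure_mono[OF fin_mu])
            (auto simp: smallf_def bigf_def)
        then have "L * measure \<mu> (C1 \<inter> smallf L) \<le> L * measure \<mu> B"
          using LK K1 by (intro mult_left_mono) auto
        then show ?thesis using c1 tL by linarith
      qed
      have d: "(\<integral>x. indicator C2 x * gr n x \<partial>M n) \<ge> (\<integral>x. indicator C2 x * fr x \<partial>\<mu>) - \<eta> - \<eta> * (S + 1)"
      proof -
        have hint: "integrable (M n) (\<lambda>x. indicator C2 x * h x)"
        proof (rule int_bdd[OF fin_M, where B=L])
          show "(\<lambda>x. indicator C2 x * h x) \<in> borel_measurable (M n)"
            using measurable_cong_sets[OF sets_M[of n] refl] by simp
          fix x assume "x \<in> space (M n)"
          then show "\<bar>indicator C2 x * h x\<bar> \<le> L" using hB[of x] LK K1 by (auto simp: indicator_def)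
        qed
        have "(\<integral>x. indicator C2 x * h x - indicator C2 x * \<eta> \<partial>M n) \<le> (\<integral>x. indicator C2 x * gr n x \<partial>M n)"
        proof (rule integral_mono_AE)
          show "integrable (M n) (\<lambda>x. indicator C2 x * h x - indicator C2 x * \<eta>)"
            using int_ind_c[OF fin_M, of C2 n \<eta>] sets_M[of n] hint
            by (intro Bochner_Integration.integrable_diff) auto
          show "integrable (M n) (\<lambda>x. indicator C2 x * gr n x)" by (intro int_ind_gr C2s)
          show "AE x in M n. indicator C2 x * h x - indicator C2 x * \<eta> \<le> indicator C2 x * gr n x"
            using fn_fin[of n]
          proof eventually_elim
            case (elim x)
            then obtain r where r: "fn n x = ereal r" by (cases "fn n x") auto
            show ?case
            proof (cases "x \<in> C2")
              case True
              then have xs: "\<bar>f x\<bar> \<le> ereal L" "\<not> fn n x \<le> f x - ereal \<eta>"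
                unfolding C2_def smallf_def B_def Bs_def by auto
              then obtain q where q: "f x = ereal q" by (cases "f x") auto
              show ?thesis using True xs by (auto simp: r q h_def gr_def fr_def indicator_def C2_def)
            qed simp
          qed
        qed
        moreover have "(\<integral>x. indicator C2 x * h x - indicator C2 x * \<eta> \<partial>M n)
            = (\<integral>x. indicator C2 x * h x \<partial>M n) - measure (M n) C2 * \<eta>"
          using Bochner_Integration.integral_diff[OF hint int_ind_c[OF fin_M, of C2 n \<eta>]]
            int_ind_const[OF fin_M, of C2 n \<eta>] sets_M[of n] by simp
        moreover have "(\<integral>x. indicator C2 x * h x \<partial>M n) \<ge> (\<integral>x. indicator C2 x * h x \<partial>\<mu>) - \<eta>"
        proof -
          have "\<bar>(\<integral>x. indicator C2 x * h x \<partial>M n) - (\<integral>x. indicator C2 x * h x \<partial>\<mu>)\<bar> \<le> \<eta>"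
            using tr C2s by blast
          then show ?thesis by linarith
        qed
        moreover have "(\<integral>x. indicator C2 x * h x \<partial>\<mu>) = (\<integral>x. indicator C2 x * fr x \<partial>\<mu>)"
          by (intro Bochner_Integration.integral_cong) (auto simp: h_def indicator_def C2_def)
        moreover have "measure (M n) C2 * \<eta> \<le> (S + 1) * \<eta>"
        proof -
          have "measure (M n) C2 \<le> measure (M n) (space \<mu>)" by (rule meas_le_M)
          also have "\<dots> \<le> S + 1" using tv1 unfolding S_def by force
          finally show ?thesis using \<eta> by (intro mult_right_mono) auto
        qed
        ultimately show ?thesis by (simp add: algebra_simps)
      qed
      have KLB: "K * measure \<mu> B + L * measure \<mu> B \<le> \<eta>"
      proof -
        have "(K + L) * measure \<mu> B \<le> (K + L) * (\<eta> / (K + L))"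
          using Bn K1 LK unfolding B_def by (intro mult_left_mono) auto
        also have "\<dots> = \<eta>" using K1 LK by simp
        finally show ?thesis by (simp add: algebra_simps)
      qed
      have "I n C \<ge> - ((8 + S) * \<eta>)"
        unfolding I_eq splitg splitf using a b c d uX KLB \<eta> S0 by (simp add: algebra_simps)
      then show "I n C \<ge> - ((8 + measure \<mu> (space \<mu>)) * \<eta>)" unfolding S_def .
    qed
  qed
qed

lemma from_liminf:
  assumes "0 \<le> liminf (\<lambda>n. ereal (INF C\<in>sets \<mu>. I n C))" and d: "\<delta> > 0"
  shows "eventually (\<lambda>n. \<forall>C\<in>sets \<mu>. I n C > - \<delta>) sequentially"
proof -
  have all: "\<forall>y<0. eventually (\<lambda>n. y < ereal (INF C\<in>sets \<mu>. I n C)) sequentially"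
    using le_Liminf_iff[THEN iffD1, OF assms(1)] .
  then have "eventually (\<lambda>n. ereal (- \<delta>) < ereal (INF C\<in>sets \<mu>. I n C)) sequentially"
    using d by (intro mp[OF spec[OF all, of "ereal (- \<delta>)"]]) simp
  then show ?thesis
  proof eventually_elim
    case (elim n)
    show ?case
    proof
      fix C assume "C \<in> sets \<mu>"
      then have "(INF C\<in>sets \<mu>. I n C) \<le> I n C" by (intro cINF_lower I_bdd)
      then show "I n C > - \<delta>" using elim by simp
    qed
  qed
qed

lemma to_liminf:
  assumes c: "c > 0" and E: "\<And>\<eta>. \<eta> > 0 \<Longrightarrow> eventually (\<lambda>n. \<forall>C\<in>sets \<mu>. I n C \<ge> - (c * \<eta>)) sequentially"
  shows "0 \<le> liminf (\<lambda>n. ereal (INF C\<in>sets \<mu>. I n C))"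
  unfolding le_Liminf_iff
proof (intro allI impI)
  fix y :: ereal assume y: "y < 0"
  obtain \<eta> where \<eta>: "\<eta> > 0" "y < ereal (- (c * \<eta>))"
  proof (cases y)
    case (real r)
    then have r: "r < 0" using y by simp
    show ?thesis
      by (rule that[of "- r / (2 * c)"]) (use r c real in \<open>auto simp: field_simps\<close>)
  next
    case MInf then show ?thesis by (intro that[of 1]) auto
  next
    case PInf then show ?thesis using y by simp
  qed
  from E[OF \<eta>(1)] show "eventually (\<lambda>n. y < ereal (INF C\<in>sets \<mu>. I n C)) sequentially"
  proof eventually_elim
    case (elim n)
    have "- (c * \<eta>) \<le> (INF C\<in>sets \<mu>. I n C)"
      using elim by (intro cINF_greatest) auto
    then show ?case using \<eta>(2) by (meson ereal_less_eq(3) order_less_le_trans)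
  qed
qed

lemma dir1i:
  assumes E: "\<And>\<delta>. \<delta> > 0 \<Longrightarrow> eventually (\<lambda>n. \<forall>C\<in>sets \<mu>. I n C > - \<delta>) sequentially"
    and \<epsilon>: "\<epsilon> > 0"
  shows "(\<lambda>n. measure \<mu> (Bs n \<epsilon>)) \<longlonglongrightarrow> 0"
proof (rule order_tendstoI)
  fix a :: real assume "a < 0"
  then show "eventually (\<lambda>n. a < measure \<mu> (Bs n \<epsilon>)) sequentially"
    by (intro always_eventually) (auto intro: order.strict_trans2)
next
  fix e :: real assume e: "e > 0"
  define \<eta> where "\<eta> = e * \<epsilon> / (4 * (1 + \<epsilon>))"
  have \<eta>: "\<eta> > 0" unfolding \<eta>_def using e \<epsilon> by simp
  obtain L0 where L0: "\<And>L. L \<ge> L0 \<Longrightarrow> tail L \<le> \<eta>" using tail_small[OF \<eta>] by blast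
  define L where "L = max L0 1"
  have L1: "L \<ge> 1" and tL: "tail L \<le> \<eta>" unfolding L_def using L0 by auto
  have bL: "measure \<mu> (bigf L) \<le> \<eta>"
  proof -
    have "measure \<mu> (bigf L) \<le> L * measure \<mu> (bigf L)" using L1 by (simp add: mult_le_cancel_right1)
    also have "\<dots> \<le> tail L" using markov_bigf[of L] L1 by simp
    finally show ?thesis using tL by simp
  qed
  define h where "h x = indicator (smallf L) x * fr x" for x
  have h_meas[measurable]: "h \<in> borel_measurable \<mu>" unfolding h_def[abs_def] by measurable
  have hB: "\<bar>h x\<bar> \<le> L" if "x \<in> space \<mu>" for x
    using L1 by (cases "f x") (auto simp: h_def indicator_def smallf_def fr_def)
  have ev_tr: "eventually (\<lambda>n. \<forall>D\<in>sets \<mu>.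
     \<bar>(\<integral>x. indicator D x * h x \<partial>M n) - (\<integral>x. indicator D x * h x \<partial>\<mu>)\<bar> \<le> \<eta>) sequentially"
    by (rule transfer[OF h_meas hB \<eta>])
  from ev_tr tv_ev[OF \<eta>] E[OF \<eta>]
  show "eventually (\<lambda>n. measure \<mu> (Bs n \<epsilon>) < e) sequentially"
  proof eventually_elim
    case (elim n)
    note tr = elim(1) and tvn = elim(2) and En = elim(3)
    define B where "B = Bs n \<epsilon>"
    have B[measurable]: "B \<in> sets \<mu>" unfolding B_def by simp
    define D where "D = B \<inter> smallf L"
    have Ds[measurable]: "D \<in> sets \<mu>" unfolding D_def by simp
    have hint: "integrable (M n) (\<lambda>x. indicator D x * h x)"
    proof (rule int_bdd[OF fin_M, where B=L])
      show "(\<lambda>x. indicator D x * h x) \<in> borel_measurable (M n)"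
        using measurable_cong_sets[OF sets_M[of n] refl] by simp
      fix x assume "x \<in> space (M n)"
      then show "\<bar>indicator D x * h x\<bar> \<le> L" using hB[of x] L1 by (auto simp: indicator_def)
    qed
    have "(\<integral>x. indicator D x * gr n x \<partial>M n) \<le> (\<integral>x. indicator D x * h x - indicator D x * \<epsilon> \<partial>M n)"
    proof (rule integral_mono_AE)
      show "integrable (M n) (\<lambda>x. indicator D x * h x - indicator D x * \<epsilon>)"
        using int_ind_c[OF fin_M, of D n \<epsilon>] sets_M[of n] hint
        by (intro Bochner_Integration.integrable_diff) auto
      show "integrable (M n) (\<lambda>x. indicator D x * gr n x)" by (intro int_ind_gr Ds)
      show "AE x in M n. indicator D x * gr n x \<le> indicator D x * h x - indicator D x * \<epsilon>"
        using fn_fin[of n]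
      proof eventually_elim
        case (elim x)
        then obtain r where r: "fn n x = ereal r" by (cases "fn n x") auto
        show ?case
        proof (cases "x \<in> D")
          case True
          then have xs: "\<bar>f x\<bar> \<le> ereal L" "fn n x \<le> f x - ereal \<epsilon>"
            unfolding D_def smallf_def B_def Bs_def by auto
          then obtain q where q: "f x = ereal q" by (cases "f x") auto
          show ?thesis using True xs by (auto simp: r q h_def gr_def fr_def indicator_def D_def)
        qed simp
      qed
    qed
    also have "\<dots> = (\<integral>x. indicator D x * h x \<partial>M n) - measure (M n) D * \<epsilon>"
      using Bochner_Integration.integral_diff[OF hint int_ind_c[OF fin_M, of D n \<epsilon>]]
        int_ind_const[OF fin_M, of D n \<epsilon>] sets_M[of n] by simp
    finally have g1: "(\<integral>x. indicator D x * gr n x \<partial>M n) \<le> (\<integral>x. indicator D x * h x \<partial>M n) - measure (M n) D * \<epsilon>" .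
    have "\<bar>(\<integral>x. indicator D x * h x \<partial>M n) - (\<integral>x. indicator D x * h x \<partial>\<mu>)\<bar> \<le> \<eta>"
      using tr Ds by blast
    moreover have "(\<integral>x. indicator D x * h x \<partial>\<mu>) = (\<integral>x. indicator D x * fr x \<partial>\<mu>)"
      by (intro Bochner_Integration.integral_cong) (auto simp: h_def indicator_def D_def)
    moreover have "I n D > - \<eta>" using En Ds by blast
    ultimately have "measure (M n) D * \<epsilon> < 2 * \<eta>" using g1 unfolding I_eq by linarith
    then have MD: "measure (M n) D < 2 * \<eta> / \<epsilon>" using \<epsilon> by (simp add: field_simps)
    have muD: "measure \<mu> D \<le> measure (M n) D + \<eta>" using tv_le[OF tvn Ds] by simp
    have "measure \<mu> B \<le> measure \<mu> (D \<union> bigf L)"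
      by (intro finite_measure.finite_measure_mono[OF fin_mu])
         (use sets.sets_into_space[OF B] in \<open>auto simp: D_def smallf_def bigf_def not_less\<close>)
    also have "\<dots> \<le> measure \<mu> D + measure \<mu> (bigf L)" by (intro measure_Un_le) auto
    finally have "measure \<mu> B < 2 * \<eta> / \<epsilon> + 2 * \<eta>" using MD muD bL by linarith
    also have "2 * \<eta> / \<epsilon> + 2 * \<eta> = e / 2"
    proof -
      have "2 * \<eta> / \<epsilon> + 2 * \<eta> = 2 * (\<eta> * (1 + \<epsilon>)) / \<epsilon>" using \<epsilon> by (simp add: field_simps)
      also have "\<eta> * (1 + \<epsilon>) = e * \<epsilon> / 4" unfolding \<eta>_def using \<epsilon> by (simp add: field_simps)
      finally show ?thesis using \<epsilon> by simp
    qed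
    finally show ?case unfolding B_def using e by simp
  qed
qed

lemma dir1ii:
  assumes E: "\<And>\<delta>. \<delta> > 0 \<Longrightarrow> eventually (\<lambda>n. \<forall>C\<in>sets \<mu>. I n C > - \<delta>) sequentially"
  shows "((\<lambda>K. limsup (\<lambda>n. u n K)) \<longlongrightarrow> 0) at_top"
proof (rule order_tendstoI)
  fix a :: ennreal assume "a < 0" then show "eventually (\<lambda>K. a < limsup (\<lambda>n. u n K)) at_top" by simp
next
  fix a :: ennreal assume a: "0 < a"
  obtain b where b: "0 < b" "b < a" using dense[OF a] by blast
  define r where "r = enn2real b"
  have btop: "b < \<infinity>" using b(2) by (rule order.strict_trans2) simp
  have r: "r > 0" "ennreal r = b" unfolding r_def using b btop
    by (auto simp: enn2real_positive_iff)
  define \<eta> where "\<eta> = r / 4"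
  have \<eta>: "\<eta> > 0" unfolding \<eta>_def using r by simp
  define F where "F = (\<integral>x. \<bar>fr x\<bar> \<partial>\<mu>)"
  have F0: "F \<ge> 0" unfolding F_def by simp
  obtain L0 where L0: "\<And>L. L \<ge> L0 \<Longrightarrow> tail L \<le> \<eta>" using tail_small[OF \<eta>] by blast
  define L where "L = max L0 1"
  have L1: "L \<ge> 1" and tL: "tail L \<le> \<eta>" unfolding L_def using L0 by auto
  define K0 where "K0 = max 1 (L * (\<eta> + F) / \<eta>)"
  have evn: "eventually (\<lambda>n. (\<forall>C\<in>sets \<mu>. \<bar>measure (M n) C - measure \<mu> C\<bar> \<le> \<eta> / L) \<and> (\<forall>C\<in>sets \<mu>. I n C > - \<eta>)) sequentially"
    using tv_ev[of "\<eta> / L"] E[OF \<eta>] \<eta> L1 by (auto intro: eventually_conj)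
  have ev4: "eventually (\<lambda>K. limsup (\<lambda>n. u n K) \<le> ennreal (4 * \<eta>)) at_top"
    unfolding eventually_at_top_linorder
  proof (intro exI[of _ K0] allI impI)
    fix K assume KK0: "K \<ge> K0"
    then have K1: "K \<ge> 1" and KL: "K \<ge> L * (\<eta> + F) / \<eta>" unfolding K0_def by auto
    have Kpos: "K > 0" using K1 by simp
    show "limsup (\<lambda>n. u n K) \<le> ennreal (4 * \<eta>)"
    proof (rule Limsup_bounded)
      from evn show "eventually (\<lambda>n. u n K \<le> ennreal (4 * \<eta>)) sequentially"
      proof eventually_elim
        case (elim n)
        then have tvn: "\<forall>C\<in>sets \<mu>. \<bar>measure (M n) C - measure \<mu> C\<bar> \<le> \<eta> / L"
          and En: "\<forall>C\<in>sets \<mu>. I n C > - \<eta>" by auto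
        define X where "X = - (\<integral>x. indicator (U n K) x * gr n x \<partial>M n)"
        have IU: "I n (U n K) > - \<eta>" using En by simp
        have aU: "(\<integral>x. indicator (U n K) x * fr x \<partial>\<mu>) \<ge> - (\<integral>x. indicator (U n K) x * \<bar>fr x\<bar> \<partial>\<mu>)"
        proof -
          have "(\<integral>x. - (indicator (U n K) x * \<bar>fr x\<bar>) \<partial>\<mu>) \<le> (\<integral>x. indicator (U n K) x * fr x \<partial>\<mu>)"
            using int_ind_absfr[OF U_sets, of n K]
            by (intro integral_mono int_ind_fr U_sets) (auto simp: indicator_def mult.commute)
          then show ?thesis by simp
        qed
        have X1: "X < \<eta> + (\<integral>x. indicator (U n K) x * \<bar>fr x\<bar> \<partial>\<mu>)"
          using IU aU unfolding I_eq X_def by linarith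
        have aF: "(\<integral>x. indicator (U n K) x * \<bar>fr x\<bar> \<partial>\<mu>) \<le> F"
          unfolding F_def using int_ind_absfr[OF U_sets, of n K]
          by (intro integral_mono absfr_int) (auto simp: indicator_def mult.commute)
        have aT: "(\<integral>x. indicator (U n K) x * \<bar>fr x\<bar> \<partial>\<mu>) \<le> \<eta> + L * measure \<mu> (U n K)"
        proof -
          have "(\<integral>x. indicator (U n K) x * \<bar>fr x\<bar> \<partial>\<mu>) \<le> tail L + L * measure \<mu> (U n K \<inter> smallf L)"
            using L1 by (intro abs_int_bound) auto
          moreover have "measure \<mu> (U n K \<inter> smallf L) \<le> measure \<mu> (U n K)"
            by (intro finite_measure.finite_measure_mono[OF fin_mu]) auto
          ultimately show ?thesis using tL L1 mult_left_mono[of "measure \<mu> (U n K \<inter> smallf L)" "measure \<mu> (U n K)" L]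
            by linarith
        qed
        have KM: "K * measure (M n) (U n K) \<le> X" unfolding X_def by (rule KU_le[OF Kpos])
        have "measure (M n) (U n K) \<le> (\<eta> + F) / K"
          using KM X1 aF Kpos by (simp add: field_simps)
        moreover have "measure \<mu> (U n K) \<le> measure (M n) (U n K) + \<eta> / L" using tv_le[OF tvn U_sets] by simp
        ultimately have "L * measure \<mu> (U n K) \<le> L * ((\<eta> + F) / K + \<eta> / L)"
          using L1 by (intro mult_left_mono) auto
        also have "\<dots> = L * (\<eta> + F) / K + \<eta>" using L1 by (simp add: field_simps)
        also have "L * (\<eta> + F) / K \<le> \<eta>"
          using KL Kpos \<eta> by (simp add: field_simps)
        finally have "L * measure \<mu> (U n K) \<le> 2 * \<eta>" by simp
        then have "X \<le> 4 * \<eta>" using X1 aT by linarith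
        then show "u n K \<le> ennreal (4 * \<eta>)" unfolding u_eq[OF Kpos] X_def[symmetric]
          by (intro ennreal_leI)
      qed
    qed
  qed
  have lt: "ennreal (4 * \<eta>) < a" unfolding \<eta>_def using r b by simp
  show "eventually (\<lambda>K. limsup (\<lambda>n. u n K) < a) at_top"
    using ev4 by (rule eventually_mono) (rule order.strict_trans1[OF _ lt])
qed

theorem main:
  "liminf (\<lambda>n. ereal (INF C\<in>sets \<mu>.
              ereal_set_integral (M n) C (fn n) - ereal_set_integral \<mu> C f)) \<ge> 0
     \<longleftrightarrow> ((\<forall>\<epsilon>>0. (\<lambda>n. measure \<mu> {s\<in>space \<mu>. fn n s \<le> f s - ereal \<epsilon>}) \<longlonglongrightarrow> 0)
          \<and> asymp_unif_integrable M (\<lambda>n. neg_part (fn n)))"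
  unfolding I_def[symmetric] Bs_def[symmetric] aui_iff
proof
  assume L: "0 \<le> liminf (\<lambda>n. ereal (INF C\<in>sets \<mu>. I n C))"
  have E: "\<And>\<delta>. \<delta> > 0 \<Longrightarrow> eventually (\<lambda>n. \<forall>C\<in>sets \<mu>. I n C > - \<delta>) sequentially"
    by (rule from_liminf[OF L])
  show "(\<forall>\<epsilon>>0. (\<lambda>n. measure \<mu> (Bs n \<epsilon>)) \<longlonglongrightarrow> 0) \<and> ((\<lambda>K. limsup (\<lambda>n. u n K)) \<longlongrightarrow> 0) at_top"
    using dir1i[OF E] dir1ii[OF E] by blast
next
  assume R: "(\<forall>\<epsilon>>0. (\<lambda>n. measure \<mu> (Bs n \<epsilon>)) \<longlonglongrightarrow> 0) \<and> ((\<lambda>K. limsup (\<lambda>n. u n K)) \<longlongrightarrow> 0) at_top"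
  show "0 \<le> liminf (\<lambda>n. ereal (INF C\<in>sets \<mu>. I n C))"
  proof (rule to_liminf)
    show "8 + measure \<mu> (space \<mu>) > 0" by (simp add: add_pos_nonneg)
    fix \<eta> :: real assume "\<eta> > 0"
    then show "eventually (\<lambda>n. \<forall>C\<in>sets \<mu>. I n C \<ge> - ((8 + measure \<mu> (space \<mu>)) * \<eta>)) sequentially"
      using key2 R by blast
  qed
qed

end

theorem proposition4p1:
  fixes M :: "nat \<Rightarrow> 'a measure" and \<mu> :: "'a measure"
    and f :: "'a \<Rightarrow> ereal" and fn :: "nat \<Rightarrow> 'a \<Rightarrow> ereal"
  assumes sets_M: "\<And>n. sets (M n) = sets \<mu>"
    and fin_M: "\<And>n. finite_measure (M n)"
    and fin_mu: "finite_measure \<mu>"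
    and tv: "tv_converges M \<mu>"
    and f_L1: "ereal_L1 \<mu> f"
    and fn_L1: "\<And>n. ereal_L1 (M n) (fn n)"
  shows "liminf (\<lambda>n. ereal (INF C\<in>sets \<mu>.
              ereal_set_integral (M n) C (fn n) - ereal_set_integral \<mu> C f)) \<ge> 0
     \<longleftrightarrow> ((\<forall>\<epsilon>>0. (\<lambda>n. measure \<mu> {s\<in>space \<mu>. fn n s \<le> f s - ereal \<epsilon>}) \<longlonglongrightarrow> 0)
          \<and> asymp_unif_integrable M (\<lambda>n. neg_part (fn n)))"
proof -
  interpret P41 M \<mu> f fn
    by (rule P41.intro) (fact sets_M fin_M fin_mu tv f_L1 fn_L1)+
  show ?thesis by (rule main)
qed

end
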